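(* Let $\mathcal{F}$ be a 3CNF formula sampled from $\mathcal{P}^{\mathrm{plant}}_{n,p}$ with planted assignment $\varphi$, where $p\geq d/n^2$ and $d$ is a sufficiently large constant. Let $F_{SUPP}$ be the number of variables whose support with respect to $\varphi$ (the number of clauses of $\mathcal{F}$ they support w.r.t. $\varphi$) is less than $d/3$. Then with probability tending to $1$ as $n\to\infty$, $F_{SUPP}\leq e^{-\Theta(d)}n$.
   Context: 3CNF: each clause has exactly three literals over three distinct variables. $\mathcal{P}^{\mathrm{plant}}_{n,p}$: pick $\varphi$ uniformly at random in $\{\mathrm{TRUE},\mathrm{FALSE}\}^n$, then include each of the $7\binom n3$ 3-clauses satisfied by $\varphi$ independently with probability $p$. A variable $x$ supports a clause $C$ with respect to a partial assignment $\psi$ if $x$ is the only variable satisfying $C$ under $\psi$ and the other two variables of $C$ are assigned by $\psi$. *)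

theory Defs
  imports "HOL-Probability.Probability"
begin

(* A literal is a pair (variable, polarity): (x, True) is the literal x, (x, False) is \<not>x.
   Variables are 0..<n. A clause is a set of literals. *)
type_synonym lit = "nat \<times> bool"
type_synonym clause = "lit set"

definition clauses3 :: "nat \<Rightarrow> clause set" where
  "clauses3 n = {C. C \<subseteq> {0..<n} \<times> UNIV \<and> card C = 3 \<and> card (fst ` C) = 3}"

definition lit_true :: "(nat \<Rightarrow> bool) \<Rightarrow> lit \<Rightarrow> bool" where
  "lit_true \<phi> l \<longleftrightarrow> \<phi> (fst l) = snd l"

definition sat_clauses :: "nat \<Rightarrow> (nat \<Rightarrow> bool) \<Rightarrow> clause set" where
  "sat_clauses n \<phi> = {C \<in> clauses3 n. \<exists>l\<in>C. lit_true \<phi> l}"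

definition assignments :: "nat \<Rightarrow> (nat \<Rightarrow> bool) set" where
  "assignments n = PiE {0..<n} (\<lambda>_. UNIV)"

definition planted :: "nat \<Rightarrow> real \<Rightarrow> ((nat \<Rightarrow> bool) \<times> clause set) pmf" where
  "planted n p =
     bind_pmf (pmf_of_set (assignments n)) (\<lambda>\<phi>.
       map_pmf (\<lambda>f. (\<phi>, {C \<in> sat_clauses n \<phi>. f C}))
         (Pi_pmf (sat_clauses n \<phi>) False (\<lambda>_. bernoulli_pmf p)))"

definition supports :: "(nat \<Rightarrow> bool option) \<Rightarrow> nat \<Rightarrow> clause \<Rightarrow> bool" where
  "supports \<psi> x C \<longleftrightarrow>
     (\<exists>l\<in>C. fst l = x \<and> \<psi> x = Some (snd l)) \<and>
     (\<forall>l\<in>C. fst l \<noteq> x \<longrightarrow> \<psi> (fst l) \<noteq> None \<and> \<psi> (fst l) \<noteq> Some (snd l))"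

definition support :: "(nat \<Rightarrow> bool option) \<Rightarrow> clause set \<Rightarrow> nat \<Rightarrow> nat" where
  "support \<psi> F x = card {C \<in> F. supports \<psi> x C}"

definition F_SUPP :: "nat \<Rightarrow> real \<Rightarrow> (nat \<Rightarrow> bool) \<Rightarrow> clause set \<Rightarrow> nat" where
  "F_SUPP n d \<phi> F = card {x \<in> {0..<n}. real (support (Some \<circ> \<phi>) F x) < d / 3}"

end

theory Submission
  imports Defs
begin

lemma finite_set_Q:
  assumes "finite S"
  shows "finite (set_pmf (Pi_pmf S False (\<lambda>_. bernoulli_pmf p)))"
proof -
  have "set_pmf (Pi_pmf S False (\<lambda>_. bernoulli_pmf p)) \<subseteq> PiE_dflt S False (set_pmf \<circ> (\<lambda>_. bernoulli_pmf p))"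
    by (rule set_Pi_pmf_subset'[OF assms])
  moreover have "finite (PiE_dflt S False (set_pmf \<circ> (\<lambda>_. bernoulli_pmf p)))"
    using assms by (intro finite_PiE_dflt) auto
  ultimately show ?thesis by (rule finite_subset)
qed

lemma exp_Z:
  fixes S :: "'a set"
  assumes "finite S" "A \<subseteq> S" "0 \<le> p" "p \<le> 1"
  shows "measure_pmf.expectation (Pi_pmf S False (\<lambda>_. bernoulli_pmf p))
           (\<lambda>f. \<Prod>C\<in>S. (if C \<in> A \<and> f C then 3/4 else (1::real))) = (1 - p/4) ^ card A"
proof -
  have "measure_pmf.expectation (Pi_pmf S False (\<lambda>_. bernoulli_pmf p))
           (\<lambda>f. \<Prod>C\<in>S. (\<lambda>C b. if C \<in> A \<and> b then 3/4 else (1::real)) C (f C))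
        = (\<Prod>C\<in>S. measure_pmf.expectation (bernoulli_pmf p) (\<lambda>b. if C \<in> A \<and> b then 3/4 else (1::real)))"
    by (rule expectation_prod_Pi_pmf) (auto simp: assms integrable_measure_pmf_finite)
  also have "\<dots> = (\<Prod>C\<in>S. (if C \<in> A then 1 - p/4 else 1))"
    using assms by (intro prod.cong) (auto simp: algebra_simps)
  also have "\<dots> = (1 - p/4) ^ card A"
    using assms by (simp add: prod.If_cases Int_absorb1 Int_absorb2 flip: Collect_mem_eq)
  finally show ?thesis by simp
qed

lemma exp_Z2:
  fixes S :: "'a set"
  assumes "finite S" "A \<subseteq> S" "B \<subseteq> S" "A \<inter> B = {}" "0 \<le> p" "p \<le> 1"
  shows "measure_pmf.expectation (Pi_pmf S False (\<lambda>_. bernoulli_pmf p))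
           (\<lambda>f. (\<Prod>C\<in>S. (if C \<in> A \<and> f C then 3/4 else (1::real))) * (\<Prod>C\<in>S. (if C \<in> B \<and> f C then 3/4 else (1::real))))
         = (1 - p/4) ^ card A * (1 - p/4) ^ card B"
proof -
  have "measure_pmf.expectation (Pi_pmf S False (\<lambda>_. bernoulli_pmf p)) (\<lambda>f. (\<Prod>C\<in>S. (if C \<in> A \<and> f C then 3/4 else (1::real))) * (\<Prod>C\<in>S. (if C \<in> B \<and> f C then 3/4 else (1::real))))
       = measure_pmf.expectation (Pi_pmf S False (\<lambda>_. bernoulli_pmf p)) (\<lambda>f. \<Prod>C\<in>S. (\<lambda>C b. (if C \<in> A \<and> b then 3/4 else (1::real)) * (if C \<in> B \<and> b then 3/4 else (1::real))) C (f C))"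
    by (simp add: prod.distrib)
  also have "\<dots> = (\<Prod>C\<in>S. measure_pmf.expectation (bernoulli_pmf p) (\<lambda>b. (if C \<in> A \<and> b then 3/4 else (1::real)) * (if C \<in> B \<and> b then 3/4 else (1::real))))"
    by (rule expectation_prod_Pi_pmf) (auto simp: assms integrable_measure_pmf_finite)
  also have "\<dots> = (\<Prod>C\<in>S. (if C \<in> A \<union> B then 1 - p/4 else 1))"
    using assms by (intro prod.cong) (auto simp: algebra_simps)
  also have "\<dots> = (1 - p/4) ^ card (A \<union> B)"
  proof -
    have "S \<inter> {C. C \<in> A \<or> C \<in> B} = A \<union> B" using assms by auto
    then show ?thesis using assms by (simp add: prod.If_cases)
  qed
  also have "\<dots> = (1 - p/4) ^ card A * (1 - p/4) ^ card B"
    using assms by (simp add: card_Un_disjoint finite_subset power_add)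
  finally show ?thesis .
qed

lemma cheb:
  fixes S :: "'a set" and T :: "nat \<Rightarrow> 'a set"
  assumes fin: "finite S" and sub: "\<And>x. x < n \<Longrightarrow> T x \<subseteq> S"
    and disj: "\<And>x y. x < n \<Longrightarrow> y < n \<Longrightarrow> x \<noteq> y \<Longrightarrow> T x \<inter> T y = {}"
    and p: "0 \<le> p" "p \<le> 1" and s: "s > 0"
  shows "measure_pmf.prob (Pi_pmf S False (\<lambda>_. bernoulli_pmf p))
     {f. s \<le> \<bar>(\<Sum>x<n. \<Prod>C\<in>S. (if C \<in> T x \<and> f C then 3/4 else (1::real))) - (\<Sum>x<n. (1 - p/4) ^ card (T x))\<bar>}
     \<le> real n / s^2"
proof -
  define Q where "Q = Pi_pmf S False (\<lambda>_. bernoulli_pmf p)"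
  define Z where "Z = (\<lambda>x f. \<Prod>C\<in>S. (if C \<in> T x \<and> f C then 3/4 else (1::real)))"
  define Y where "Y = (\<lambda>f. \<Sum>x<n. Z x f)"
  define m where "m = (\<lambda>x. (1 - p/4) ^ card (T x) :: real)"
  have int: "integrable Q g" for g :: "_ \<Rightarrow> real"
    unfolding Q_def by (rule integrable_measure_pmf_finite[OF finite_set_Q[OF fin]])
  have Z01: "0 \<le> Z x f \<and> Z x f \<le> 1" for x f
    unfolding Z_def by (auto intro!: prod_nonneg prod_le_1)
  have m0: "0 \<le> m x" for x unfolding m_def using p by simp
  have EZ: "measure_pmf.expectation Q (Z x) = m x" if "x < n" for x
    unfolding Q_def Z_def m_def using exp_Z[OF fin sub[OF that] p] by simp
  have EY: "measure_pmf.expectation Q Y = (\<Sum>x<n. m x)"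
    unfolding Y_def by (subst Bochner_Integration.integral_sum) (auto intro: int simp: EZ)
  have EZZ: "measure_pmf.expectation Q (\<lambda>f. Z x f * Z y f) \<le> (if x = y then 1 else 0) + m x * m y"
    if "x < n" "y < n" for x y
  proof (cases "x = y")
    case True
    have "measure_pmf.expectation Q (\<lambda>f. Z x f * Z y f) \<le> measure_pmf.expectation Q (\<lambda>f. 1)"
      by (intro integral_mono int) (use Z01 in \<open>auto intro: mult_le_one\<close>)
    also have "\<dots> = 1" by simp
    moreover have "0 \<le> m x * m y" using m0 by simp
    ultimately have "measure_pmf.expectation Q (\<lambda>f. Z x f * Z y f) \<le> 1 + m x * m y" by linarith
    then show ?thesis using True by simp
  next
    case False
    have "measure_pmf.expectation Q (\<lambda>f. Z x f * Z y f) = m x * m y"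
      unfolding Q_def Z_def m_def using exp_Z2[OF fin sub[OF that(1)] sub[OF that(2)] disj[OF that False] p] by simp
    then show ?thesis using False by simp
  qed
  have EY2: "measure_pmf.expectation Q (\<lambda>f. (Y f)^2) \<le> real n + (\<Sum>x<n. m x)^2"
  proof -
    have "(\<lambda>f. (Y f)^2) = (\<lambda>f. \<Sum>x<n. \<Sum>y<n. Z x f * Z y f)"
      unfolding Y_def by (simp add: power2_eq_square sum_product)
    then have "measure_pmf.expectation Q (\<lambda>f. (Y f)^2) = (\<Sum>x<n. \<Sum>y<n. measure_pmf.expectation Q (\<lambda>f. Z x f * Z y f))"
      by (simp add: Bochner_Integration.integral_sum int)
    also have "\<dots> \<le> (\<Sum>x<n. \<Sum>y<n. (if x = y then 1 else 0) + m x * m y)"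
      by (intro sum_mono EZZ) auto
    also have "\<dots> = real n + (\<Sum>x<n. m x)^2"
      by (simp add: sum.distrib power2_eq_square sum_product)
    finally show ?thesis .
  qed
  have var: "measure_pmf.variance Q Y \<le> real n"
    using EY2 EY by (subst measure_pmf.variance_eq) (auto intro: int)
  have "measure_pmf.prob Q {f \<in> space (measure_pmf Q). s \<le> \<bar>Y f - measure_pmf.expectation Q Y\<bar>}
        \<le> measure_pmf.variance Q Y / s^2"
    by (rule measure_pmf.Chebyshev_inequality) (auto intro: int s)
  also have "\<dots> \<le> real n / s^2"
    using var s by (simp add: divide_right_mono)
  finally show ?thesis unfolding Q_def Y_def Z_def EY[unfolded Q_def Y_def Z_def] m_def by simp
qed

definition Tset :: "nat \<Rightarrow> (nat \<Rightarrow> bool) \<Rightarrow> nat \<Rightarrow> clause set" where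
  "Tset n \<phi> x = (\<lambda>B. insert (x, \<phi> x) ((\<lambda>y. (y, \<not> \<phi> y)) ` B)) ` {B. B \<subseteq> {0..<n} - {x} \<and> card B = 2}"

lemma card_Tset:
  assumes "x < n"
  shows "card (Tset n \<phi> x) = (n - 1) choose 2"
proof -
  let ?g = "\<lambda>B. insert (x, \<phi> x) ((\<lambda>y. (y, \<not> \<phi> y)) ` B)"
  have inj: "inj_on ?g {B. B \<subseteq> {0..<n} - {x} \<and> card B = 2}"
  proof (rule inj_onI)
    fix B1 B2 assume B1: "B1 \<in> {B. B \<subseteq> {0..<n} - {x} \<and> card B = 2}" and B2: "B2 \<in> {B. B \<subseteq> {0..<n} - {x} \<and> card B = 2}"
      and eq: "?g B1 = ?g B2"
    have "fst ` ?g B1 - {x} = B1" using B1 by (auto simp: image_image)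
    moreover have "fst ` ?g B2 - {x} = B2" using B2 by (auto simp: image_image)
    ultimately show "B1 = B2" using eq by simp
  qed
  have "card (Tset n \<phi> x) = card {B. B \<subseteq> {0..<n} - {x} \<and> card B = 2}"
    unfolding Tset_def by (rule card_image[OF inj])
  also have "\<dots> = card ({0..<n} - {x}) choose 2" by (rule n_subsets) simp
  also have "card ({0..<n} - {x}) = n - 1" using assms by simp
  finally show ?thesis .
qed

lemma Tset_props:
  assumes "C \<in> Tset n \<phi> x" "x < n"
  shows "C \<in> sat_clauses n \<phi>" "supports (Some \<circ> \<phi>) x C"
proof -
  obtain B where B: "B \<subseteq> {0..<n} - {x}" "card B = 2" and C: "C = insert (x, \<phi> x) ((\<lambda>y. (y, \<not> \<phi> y)) ` B)"
    using assms(1) unfolding Tset_def by auto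
  have finB: "finite B" using B(2) by (metis card.infinite zero_neq_numeral)
  have fC: "fst ` C = insert x B" unfolding C by (auto simp: image_image)
  have c1: "card (fst ` C) = 3" unfolding fC using B finB by (subst card_insert_disjoint) auto
  have "card ((\<lambda>y. (y, \<not> \<phi> y)) ` B) \<le> 2" using card_image_le[OF finB] B(2) by metis
  then have c2: "card C \<le> 3" unfolding C using finB
    by (simp add: card_insert_if)
  have finC: "finite C" unfolding C using finB by simp
  have "card (fst ` C) \<le> card C" by (rule card_image_le[OF finC])
  then have c3: "card C = 3" using c1 c2 by simp
  have sub: "C \<subseteq> {0..<n} \<times> UNIV" unfolding C using B assms(2) by auto
  show "C \<in> sat_clauses n \<phi>"
    unfolding sat_clauses_def clauses3_def using c1 c3 sub
    by (auto simp: C lit_true_def)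
  show "supports (Some \<circ> \<phi>) x C"
    unfolding supports_def C using B by auto
qed

lemma Tset_disj:
  assumes "x \<noteq> y"
  shows "Tset n \<phi> x \<inter> Tset n \<phi> y = {}"
  using assms unfolding Tset_def by auto

lemma finite_sat: "finite (sat_clauses n \<phi>)"
proof -
  have "sat_clauses n \<phi> \<subseteq> Pow ({0..<n} \<times> (UNIV :: bool set))"
    unfolding sat_clauses_def clauses3_def by auto
  then show ?thesis by (rule finite_subset) simp
qed

lemma Kbound:
  fixes d :: real
  assumes "real t \<le> d / 3"
  shows "1 \<le> (4/3) powr (d/3) * (3/4::real)^t"
proof -
  have "(4/3::real) powr (real t) \<le> (4/3) powr (d/3)"
    by (rule powr_mono) (use assms in auto)
  moreover have "(4/3::real) powr (real t) = (4/3)^t" by (simp add: powr_realpow)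
  moreover have "(3/4::real)^t = 1 / (4/3)^t" by (simp add: power_divide)
  ultimately show ?thesis by (simp add: field_simps)
qed

lemma FSUPP_le:
  fixes d :: real
  assumes "0 \<le> d"
  shows "real (F_SUPP n d \<phi> {C \<in> sat_clauses n \<phi>. f C})
    \<le> (4/3) powr (d/3) * (\<Sum>x<n. \<Prod>C\<in>sat_clauses n \<phi>. (if C \<in> Tset n \<phi> x \<and> f C then 3/4 else (1::real)))"
proof -
  let ?S = "sat_clauses n \<phi>"
  let ?F = "{C \<in> sat_clauses n \<phi>. f C}"
  let ?K = "(4/3::real) powr (d/3)"
  have each: "(if real (support (Some \<circ> \<phi>) ?F x) < d / 3 then 1 else 0)
      \<le> ?K * (\<Prod>C\<in>?S. (if C \<in> Tset n \<phi> x \<and> f C then 3/4 else (1::real)))" if x: "x < n" for x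
  proof -
    have TS: "Tset n \<phi> x \<subseteq> ?S" using Tset_props(1)[OF _ x] by blast
    have "(\<Prod>C\<in>?S. (if C \<in> Tset n \<phi> x \<and> f C then 3/4 else (1::real)))
        = (3/4) ^ card (?S \<inter> {C. C \<in> Tset n \<phi> x \<and> f C})"
      by (simp add: prod.If_cases finite_sat)
    also have "?S \<inter> {C. C \<in> Tset n \<phi> x \<and> f C} = {C \<in> Tset n \<phi> x. f C}" using TS by auto
    finally have Zeq: "(\<Prod>C\<in>?S. (if C \<in> Tset n \<phi> x \<and> f C then 3/4 else (1::real))) = (3/4) ^ card {C \<in> Tset n \<phi> x. f C}" .
    have "{C \<in> Tset n \<phi> x. f C} \<subseteq> {C \<in> ?F. supports (Some \<circ> \<phi>) x C}"
      using Tset_props[OF _ x] by auto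
    then have tle: "card {C \<in> Tset n \<phi> x. f C} \<le> support (Some \<circ> \<phi>) ?F x"
      unfolding support_def by (intro card_mono) (auto intro: finite_subset[OF _ finite_sat])
    show ?thesis
    proof (cases "real (support (Some \<circ> \<phi>) ?F x) < d / 3")
      case True
      then have "real (card {C \<in> Tset n \<phi> x. f C}) \<le> d/3" using tle by linarith
      from Kbound[OF this] show ?thesis using True Zeq by simp
    next
      case False
      then show ?thesis using Zeq by simp
    qed
  qed
  have "real (F_SUPP n d \<phi> ?F) = (\<Sum>x<n. (if real (support (Some \<circ> \<phi>) ?F x) < d / 3 then 1 else 0))"
    unfolding F_SUPP_def by (simp add: sum.If_cases lessThan_atLeast0 Int_def)
  also have "\<dots> \<le> (\<Sum>x<n. ?K * (\<Prod>C\<in>?S. (if C \<in> Tset n \<phi> x \<and> f C then 3/4 else (1::real))))"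
    by (intro sum_mono each) auto
  finally show ?thesis by (simp add: sum_distrib_left)
qed

lemma inner_bound:
  fixes d p s B :: real
  assumes p: "0 \<le> p" "p \<le> 1" and s: "s > 0" and d: "0 \<le> d"
    and KB: "(4/3) powr (d/3) * (real n * (1 - p/4) ^ ((n - 1) choose 2) + s) \<le> B"
  shows "measure_pmf.prob (map_pmf (\<lambda>f. (\<phi>, {C \<in> sat_clauses n \<phi>. f C}))
            (Pi_pmf (sat_clauses n \<phi>) False (\<lambda>_. bernoulli_pmf p)))
           {(\<phi>, F). real (F_SUPP n d \<phi> F) \<le> B} \<ge> 1 - real n / s^2"
proof -
  let ?S = "sat_clauses n \<phi>"
  let ?Q = "Pi_pmf ?S False (\<lambda>_. bernoulli_pmf p)"
  let ?Y = "\<lambda>f. (\<Sum>x<n. \<Prod>C\<in>?S. (if C \<in> Tset n \<phi> x \<and> f C then 3/4 else (1::real)))"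
  let ?M = "(\<Sum>x<n. (1 - p/4) ^ card (Tset n \<phi> x))"
  let ?K = "(4/3::real) powr (d/3)"
  let ?bad = "{f. s \<le> \<bar>?Y f - ?M\<bar>}"
  have bad: "measure_pmf.prob ?Q ?bad \<le> real n / s^2"
    by (rule cheb[OF finite_sat _ Tset_disj p s]) (auto dest: Tset_props)
  have M: "?M = real n * (1 - p/4) ^ ((n - 1) choose 2)"
    by (simp add: card_Tset)
  have "- ?bad \<subseteq> (\<lambda>f. (\<phi>, {C \<in> ?S. f C})) -` {(\<phi>, F). real (F_SUPP n d \<phi> F) \<le> B}"
  proof
    fix f assume "f \<in> - ?bad"
    then have "?Y f < ?M + s" by auto
    then have "?K * ?Y f \<le> ?K * (?M + s)" by (intro mult_left_mono) auto
    then have "?K * ?Y f \<le> ?K * (real n * (1 - p/4) ^ ((n - 1) choose 2) + s)" by (simp only: M)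
    with FSUPP_le[OF d, of n \<phi> f] KB have "real (F_SUPP n d \<phi> {C \<in> ?S. f C}) \<le> B" by linarith
    then show "f \<in> (\<lambda>f. (\<phi>, {C \<in> ?S. f C})) -` {(\<phi>, F). real (F_SUPP n d \<phi> F) \<le> B}" by simp
  qed
  then have "measure_pmf.prob ?Q (- ?bad) \<le> measure_pmf.prob ?Q ((\<lambda>f. (\<phi>, {C \<in> ?S. f C})) -` {(\<phi>, F). real (F_SUPP n d \<phi> F) \<le> B})"
    by (intro measure_pmf.finite_measure_mono) auto
  moreover have "measure_pmf.prob ?Q (- ?bad) = 1 - measure_pmf.prob ?Q ?bad"
    using measure_pmf.prob_compl[of ?bad ?Q] by (simp add: Compl_eq_Diff_UNIV)
  ultimately show ?thesis using bad by simp
qed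

lemma prob_bind_ge:
  assumes "\<And>x. measure_pmf.prob (N x) A \<ge> r"
  shows "measure_pmf.prob (bind_pmf M N) A \<ge> r"
proof (cases "r \<le> 0")
  case True then show ?thesis using measure_nonneg[of "measure_pmf (bind_pmf M N)" A] by linarith
next
  case False
  have "ennreal r = (\<integral>\<^sup>+x. ennreal r \<partial>M)" by (simp add: measure_pmf.emeasure_space_1)
  also have "\<dots> \<le> (\<integral>\<^sup>+x. emeasure (N x) A \<partial>M)"
    by (intro nn_integral_mono) (simp add: measure_pmf.emeasure_eq_measure assms)
  also have "\<dots> = emeasure (bind_pmf M N) A" by simp
  also have "\<dots> = ennreal (measure_pmf.prob (bind_pmf M N) A)" by (simp add: measure_pmf.emeasure_eq_measure)
  finally show ?thesis by simp
qed

lemma two_choose: "2 * (m choose 2) = m * (m - 1)"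
proof -
  have "even (m * (m - 1))" by (cases m) auto
  then show ?thesis by (simp add: choose_two)
qed

lemma numeric:
  fixes p d :: real
  assumes p: "0 \<le> p" "p \<le> 1" and d: "0 \<le> d" and N: "real N * p \<ge> 0.48 * d"
  shows "(4/3) powr (d/3) * (1 - p/4) ^ N \<le> exp (- d / 120)"
proof -
  have "(1 - p/4) ^ N \<le> exp (- p/4) ^ N"
    by (intro power_mono) (use p exp_ge_add_one_self[of "-p/4"] in auto)
  also have "\<dots> = exp (- p * real N / 4)" by (simp flip: exp_of_nat_mult)
  finally have a: "(1 - p/4) ^ N \<le> exp (- p * real N / 4)" .
  have "ln (4/3::real) \<le> 1/3" using ln_le_minus_one[of "4/3::real"] by simp
  then have "ln (4/3::real) * (d/3) \<le> (1/3) * (d/3)" using d by (intro mult_right_mono) auto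
  then have K: "(4/3::real) powr (d/3) \<le> exp (d/9)" by (simp add: powr_def)
  have "(4/3) powr (d/3) * (1 - p/4) ^ N \<le> exp (d/9) * exp (- p * real N / 4)"
    by (intro mult_mono K a) (use p in auto)
  also have "\<dots> = exp (d/9 - p * real N / 4)" by (simp add: exp_add[symmetric])
  also have "\<dots> \<le> exp (- d / 120)" using N d by (simp add: algebra_simps)
  finally show ?thesis .
qed

theorem proposition2:
  shows "\<exists>c>0. \<exists>d0. \<forall>d\<ge>d0. \<forall>p :: nat \<Rightarrow> real.
           (\<forall>\<^sub>F n in sequentially. d / (real n)^2 \<le> p n \<and> p n \<le> 1) \<longrightarrow>
           (\<lambda>n. measure_pmf.prob (planted n (p n))
                  {(\<phi>, F). real (F_SUPP n d \<phi> F) \<le> exp (- c * d) * real n})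
             \<longlonglongrightarrow> 1"
proof (rule exI[of _ "1/240"], rule conjI, simp, rule exI[of _ 240], intro allI impI)
  fix d :: real and p :: "nat \<Rightarrow> real"
  assume d: "240 \<le> d" and ev: "\<forall>\<^sub>F n in sequentially. d / (real n)^2 \<le> p n \<and> p n \<le> 1"
  obtain M0 where M0: "\<And>n. n \<ge> M0 \<Longrightarrow> d / (real n)^2 \<le> p n \<and> p n \<le> 1"
    using ev by (auto simp: eventually_sequentially)
  define K where "K = (4/3::real) powr (d/3)"
  define e where "e = exp (- (1/240) * d)"
  define Cst where "Cst = 4 * K^2 / e^2"
  have Kpos: "K > 0" unfolding K_def by simp
  have epos: "e > 0" unfolding e_def by simp
  have e2: "exp (- d / 120) \<le> e / 2"
  proof -
    have "2 \<le> exp (d/240)" using exp_ge_add_one_self[of "d/240"] d by linarith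
    then have "exp (- d/240) \<le> 1/2" by (simp add: exp_minus field_simps)
    moreover have "exp (- d / 120) = e * exp (- d/240)" unfolding e_def by (simp add: exp_add[symmetric])
    ultimately show ?thesis using epos by (simp add: mult_left_mono[of _ "1/2" e, simplified])
  qed
  let ?P = "\<lambda>n. measure_pmf.prob (planted n (p n))
                  {(\<phi>, F). real (F_SUPP n d \<phi> F) \<le> exp (- (1/240) * d) * real n}"
  have low: "?P n \<ge> 1 - Cst / real n" if n: "n \<ge> max M0 100" for n
  proof -
    from M0[of n] n have pn: "d / (real n)^2 \<le> p n" "p n \<le> 1" by auto
    have n100: "real n \<ge> 100" using n by simp
    have p0: "0 \<le> p n" using pn(1) d by (smt (verit) divide_nonneg_nonneg zero_le_power2)
    define s where "s = real n * e / (2 * K)"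
    have spos: "s > 0" unfolding s_def using n100 epos Kpos by simp
    define N where "N = (n - 1) choose 2"
    have N2: "2 * real N = (real n - 1) * (real n - 2)"
    proof -
      have "2 * N = (n - 1) * (n - 1 - 1)" unfolding N_def by (rule two_choose)
      then have "real (2 * N) = real ((n - 1) * (n - 1 - 1))" by simp
      then show ?thesis using n by (simp add: of_nat_diff)
    qed
    have Nbig: "real N \<ge> 0.48 * (real n)^2"
    proof -
      have "real n * real n \<ge> 100 * real n" using n100 by (intro mult_right_mono) auto
      moreover have "2 * real N = real n * real n - 3 * real n + 2" using N2 by (simp add: algebra_simps)
      ultimately show ?thesis using n100 unfolding power2_eq_square by linarith
    qed
    have "real N * p n \<ge> real N * (d / (real n)^2)" using pn(1) by (intro mult_left_mono) auto
    moreover have "real N * (d / (real n)^2) \<ge> 0.48 * d"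
    proof -
      have "0.48 * (real n)^2 * d \<le> real N * d" using Nbig d by (intro mult_right_mono) auto
      then show ?thesis using n100 by (simp add: field_simps)
    qed
    ultimately have Np: "real N * p n \<ge> 0.48 * d" by linarith
    have num: "K * (1 - p n/4) ^ N \<le> exp (- d / 120)"
      unfolding K_def by (rule numeric[OF p0 pn(2) _ Np]) (use d in auto)
    have KB: "K * (real n * (1 - p n/4) ^ N + s) \<le> exp (- (1/240) * d) * real n"
    proof -
      have "K * (real n * (1 - p n/4) ^ N) = real n * (K * (1 - p n/4) ^ N)" by simp
      also have "\<dots> \<le> real n * (e/2)" using num e2 n100 by (intro mult_left_mono) auto
      finally have "K * (real n * (1 - p n/4) ^ N) \<le> real n * (e/2)" .
      moreover have "K * s = real n * (e/2)" unfolding s_def using Kpos by simp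
      ultimately have "K * (real n * (1 - p n/4) ^ N + s) \<le> real n * (e/2) + real n * (e/2)"
        by (simp only: distrib_left)
      also have "\<dots> = e * real n" by simp
      finally show ?thesis unfolding e_def .
    qed
    have "?P n \<ge> 1 - real n / s^2"
      unfolding planted_def
      by (rule prob_bind_ge, rule inner_bound[OF p0 pn(2) spos]) (use d KB in \<open>auto simp: K_def N_def\<close>)
    moreover have "real n / s^2 = Cst / real n"
      unfolding s_def Cst_def using n100 epos Kpos by (simp add: field_simps power2_eq_square)
    ultimately show ?thesis by simp
  qed
  have l1: "\<forall>\<^sub>F n in sequentially. 1 - Cst / real n \<le> ?P n"
    unfolding eventually_sequentially by (rule exI[of _ "max M0 100"]) (use low in blast)
  have l2: "\<forall>\<^sub>F n in sequentially. ?P n \<le> 1" by simp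
  have "(\<lambda>n. 1 - Cst / real n) \<longlonglongrightarrow> 1 - 0"
    by (intro tendsto_diff tendsto_const lim_const_over_n)
  then have l3: "(\<lambda>n. 1 - Cst / real n) \<longlonglongrightarrow> 1" by simp
  show "?P \<longlonglongrightarrow> 1"
    by (rule tendsto_sandwich[OF l1 l2 l3 tendsto_const])
qed

end
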